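(* Let $(G,\theta)$ be a $p$-oriented profinite group satisfying formal Hilbert 90. Then for every open subgroup $H\subset G$ and every $n\geq1$, the maps $Z^1(H,S[p^n])\to Z^1(H,S[p^{n-1}])$ and $H^1(H,S[p^n])\to H^1(H,S[p^{n-1}])$ induced by the $G$-module homomorphism $S[p^n]\to S[p^{n-1}]$, $x\mapsto px$, are surjective.
   Context: A $p$-oriented profinite group is a pair $(G,\theta)$ with $G$ profinite and $\theta\colon G\to\mathbb Z_p^\times$ a continuous homomorphism. $\mathbb Z/p^n\mathbb Z(1)$ is $\mathbb Z/p^n\mathbb Z$ with $g\cdot v=\theta(g)v$. $(G,\theta)$ satisfies formal Hilbert 90 if for every open subgroup $H\subset G$ and every $n\geq1$ the reduction map $H^1(H,\mathbb Z/p^n\mathbb Z(1))\to H^1(H,\mathbb Z/p\mathbb Z(1))$ is surjective. $S$ is the discrete $G$-module $\mathbb Q/\mathbb Z_{(p)}$ with $g$ acting by multiplication by $\theta(g)$; $S[p^n]$ is its $p^n$-torsion (isomorphic to $\mathbb Z/p^n\mathbb Z(1)$). $Z^1$ denotes continuous 1-cocycles. *)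

theory Defs
  imports "HOL-Analysis.Analysis" "HOL-Algebra.Group"
begin

definition topological_group :: "('g, 'b) monoid_scheme \<Rightarrow> 'g topology \<Rightarrow> bool" where
  "topological_group G T \<longleftrightarrow> group G \<and> topspace T = carrier G \<and>
     continuous_map (prod_topology T T) T (\<lambda>(x, y). x \<otimes>\<^bsub>G\<^esub> y) \<and>
     continuous_map T T (\<lambda>x. inv\<^bsub>G\<^esub> x)"

definition profinite_group :: "('g, 'b) monoid_scheme \<Rightarrow> 'g topology \<Rightarrow> bool" where
  "profinite_group G T \<longleftrightarrow> topological_group G T \<and> compact_space T \<and> Hausdorff_space T \<and>
     (\<forall>C \<in> connected_components_of T. \<exists>x. C = {x})"

definition open_subgroup :: "'g set \<Rightarrow> ('g, 'b) monoid_scheme \<Rightarrow> 'g topology \<Rightarrow> bool" where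
  "open_subgroup H G T \<longleftrightarrow> subgroup H G \<and> openin T H"

text \<open>A continuous homomorphism \<theta> : G \<rightarrow> \<int>_p^\<times>.  Since \<int>_p = lim \<int>/p^n\<int> (with the
inverse limit topology), \<theta> is given by its reductions \<theta> g n \<in> {0..<p^n} modulo p^n,
which must be compatible, each continuous into the discrete space \<int>/p^n\<int>,
multiplicative and with unit values.\<close>
definition p_orientation :: "nat \<Rightarrow> ('g, 'b) monoid_scheme \<Rightarrow> 'g topology \<Rightarrow> ('g \<Rightarrow> nat \<Rightarrow> int) \<Rightarrow> bool" where
  "p_orientation p G T \<theta> \<longleftrightarrow>
     (\<forall>g \<in> carrier G. \<forall>n. 0 \<le> \<theta> g n \<and> \<theta> g n < int p ^ n) \<and>
     (\<forall>g \<in> carrier G. \<forall>n. \<theta> g (Suc n) mod (int p ^ n) = \<theta> g n) \<and>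
     (\<forall>g \<in> carrier G. \<forall>n. coprime (\<theta> g n) (int p ^ n)) \<and>
     (\<forall>g \<in> carrier G. \<forall>h \<in> carrier G. \<forall>n.
         \<theta> (g \<otimes>\<^bsub>G\<^esub> h) n = (\<theta> g n * \<theta> h n) mod (int p ^ n)) \<and>
     (\<forall>n. continuous_map T (discrete_topology {0..<int p ^ n}) (\<lambda>g. \<theta> g n))"

text \<open>The module \<int>/p^n\<int>(1) (equivalently S[p^n] = p^{-n}\<int>_(p)/\<int>_(p), via a/p^n \<mapsto> a)
is modelled by the residues {0..<p^n}, with g acting as multiplication by \<theta>(g) mod p^n.\<close>
definition Z1 :: "nat \<Rightarrow> ('g, 'b) monoid_scheme \<Rightarrow> 'g topology \<Rightarrow> ('g \<Rightarrow> nat \<Rightarrow> int)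
                   \<Rightarrow> 'g set \<Rightarrow> nat \<Rightarrow> ('g \<Rightarrow> int) set" where
  "Z1 p G T \<theta> H n = {c.
      (\<forall>g \<in> H. 0 \<le> c g \<and> c g < int p ^ n) \<and> (\<forall>g. g \<notin> H \<longrightarrow> c g = 0) \<and>
      continuous_map (subtopology T H) (discrete_topology {0..<int p ^ n}) c \<and>
      (\<forall>g \<in> H. \<forall>h \<in> H. c (g \<otimes>\<^bsub>G\<^esub> h) = (c g + \<theta> g n * c h) mod (int p ^ n))}"

definition B1 :: "nat \<Rightarrow> ('g \<Rightarrow> nat \<Rightarrow> int) \<Rightarrow> 'g set \<Rightarrow> nat \<Rightarrow> ('g \<Rightarrow> int) set" where
  "B1 p \<theta> H n = {c. \<exists>a. (\<forall>g \<in> H. c g = (\<theta> g n * a - a) mod (int p ^ n)) \<and>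
                         (\<forall>g. g \<notin> H \<longrightarrow> c g = 0)}"

definition h1_class :: "nat \<Rightarrow> ('g, 'b) monoid_scheme \<Rightarrow> 'g topology \<Rightarrow> ('g \<Rightarrow> nat \<Rightarrow> int)
                   \<Rightarrow> 'g set \<Rightarrow> nat \<Rightarrow> ('g \<Rightarrow> int) \<Rightarrow> ('g \<Rightarrow> int) set" where
  "h1_class p G T \<theta> H n c = {c' \<in> Z1 p G T \<theta> H n.
      (\<lambda>g. (c' g - c g) mod (int p ^ n)) \<in> B1 p \<theta> H n}"

definition H1 :: "nat \<Rightarrow> ('g, 'b) monoid_scheme \<Rightarrow> 'g topology \<Rightarrow> ('g \<Rightarrow> nat \<Rightarrow> int)
                   \<Rightarrow> 'g set \<Rightarrow> nat \<Rightarrow> ('g \<Rightarrow> int) set set" where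
  "H1 p G T \<theta> H n = h1_class p G T \<theta> H n ` Z1 p G T \<theta> H n"

text \<open>Under the
identification S[p^n] = \<int>/p^n\<int>, multiplication by p : S[p^n] \<rightarrow> S[p^{n-1}] is
reduction modulo p^{n-1}; reduction \<int>/p^n\<int>(1) \<rightarrow> \<int>/p\<int>(1) is reduction mod p.\<close>
definition reduce :: "nat \<Rightarrow> nat \<Rightarrow> ('g \<Rightarrow> int) \<Rightarrow> ('g \<Rightarrow> int)" where
  "reduce p m c = (\<lambda>g. c g mod (int p ^ m))"

definition formal_hilbert90 :: "nat \<Rightarrow> ('g, 'b) monoid_scheme \<Rightarrow> 'g topology \<Rightarrow> ('g \<Rightarrow> nat \<Rightarrow> int) \<Rightarrow> bool" where
  "formal_hilbert90 p G T \<theta> \<longleftrightarrow>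
     (\<forall>H n. open_subgroup H G T \<and> n \<ge> 1 \<longrightarrow>
        h1_class p G T \<theta> H 1 ` reduce p 1 ` Z1 p G T \<theta> H n = H1 p G T \<theta> H 1)"

end

theory Submission imports Defs begin

definition LC :: "'g topology \<Rightarrow> ('g \<Rightarrow> int) \<Rightarrow> bool" where
  "LC X f \<longleftrightarrow> (\<forall>x\<in>topspace X. \<exists>U. openin X U \<and> x \<in> U \<and> (\<forall>y\<in>U. f y = f x))"

lemma cont_disc:
  "continuous_map X (discrete_topology S) f \<longleftrightarrow> (f \<in> topspace X \<rightarrow> S \<and> LC X f)"
proof
  assume c: "continuous_map X (discrete_topology S) f"
  have fs: "f \<in> topspace X \<rightarrow> S" using c unfolding continuous_map_def topspace_discrete_topology by blast
  have pre: "\<And>U. U \<subseteq> S \<Longrightarrow> openin X {x \<in> topspace X. f x \<in> U}"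
    using c unfolding continuous_map_def openin_discrete_topology by blast
  have "LC X f" unfolding LC_def
  proof
    fix x assume x: "x \<in> topspace X"
    have "f x \<in> S" using fs x by blast
    hence o: "openin X {y \<in> topspace X. f y \<in> {f x}}" using pre by blast
    show "\<exists>U. openin X U \<and> x \<in> U \<and> (\<forall>y\<in>U. f y = f x)"
      apply (rule exI[of _ "{y \<in> topspace X. f y \<in> {f x}}"])
      using o x by blast
  qed
  thus "f \<in> topspace X \<rightarrow> S \<and> LC X f" using fs by blast
next
  assume a: "f \<in> topspace X \<rightarrow> S \<and> LC X f"
  have o: "openin X {x \<in> topspace X. f x \<in> U}" for U
  proof (subst openin_subopen, intro ballI)
    fix x assume x: "x \<in> {x \<in> topspace X. f x \<in> U}"
    then obtain V where V: "openin X V" "x \<in> V" "\<forall>y\<in>V. f y = f x" using a unfolding LC_def by blast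
    have "V \<subseteq> topspace X" using openin_subset[OF V(1)] .
    hence "V \<subseteq> {x \<in> topspace X. f x \<in> U}" using V(3) x by auto
    thus "\<exists>T. openin X T \<and> x \<in> T \<and> T \<subseteq> {x \<in> topspace X. f x \<in> U}" using V by blast
  qed
  show "continuous_map X (discrete_topology S) f"
    unfolding continuous_map_def topspace_discrete_topology using a o by blast
qed

lemma LC_const: "LC X (\<lambda>x. c)" unfolding LC_def using openin_topspace by blast


lemma LC_bin: assumes "LC X f" "LC X g" shows "LC X (\<lambda>x. F (f x) (g x))"
  unfolding LC_def
proof
  fix x assume x: "x \<in> topspace X"
  obtain U where U: "openin X U" "x \<in> U" "\<forall>y\<in>U. f y = f x" using assms(1) x unfolding LC_def by blast
  obtain V where V: "openin X V" "x \<in> V" "\<forall>y\<in>V. g y = g x" using assms(2) x unfolding LC_def by blast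
  show "\<exists>W. openin X W \<and> x \<in> W \<and> (\<forall>y\<in>W. F (f y) (g y) = F (f x) (g x))"
  proof (intro exI conjI)
    show "openin X (U \<inter> V)" using U(1) V(1) by (rule openin_Int)
    show "x \<in> U \<inter> V" using U V by blast
    show "\<forall>y\<in>U \<inter> V. F (f y) (g y) = F (f x) (g x)" using U(3) V(3) by simp
  qed
qed

lemma LC_un: "LC X f \<Longrightarrow> LC X (\<lambda>x. F (f x))"
  using LC_bin[of X f f "\<lambda>a b. F a"] by simp

lemma LC_cong: assumes "LC X f" "\<And>x. x \<in> topspace X \<Longrightarrow> f x = g x" shows "LC X g"
  unfolding LC_def
proof
  fix x assume x: "x \<in> topspace X"
  obtain U where U: "openin X U" "x \<in> U" "\<forall>y\<in>U. f y = f x" using assms(1) x unfolding LC_def by blast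
  have "\<forall>y\<in>U. g y = g x" using U openin_subset[OF U(1)] assms(2) x by (metis subsetD)
  thus "\<exists>U. openin X U \<and> x \<in> U \<and> (\<forall>y\<in>U. g y = g x)" using U by blast
qed


lemma orient_range: "p_orientation p G T \<theta> \<Longrightarrow> g \<in> carrier G \<Longrightarrow> 0 \<le> \<theta> g n \<and> \<theta> g n < int p ^ n"
  unfolding p_orientation_def by blast
lemma orient_compat: "p_orientation p G T \<theta> \<Longrightarrow> g \<in> carrier G \<Longrightarrow> \<theta> g (Suc n) mod (int p ^ n) = \<theta> g n"
  unfolding p_orientation_def by blast

lemma theta_mod:
  assumes "p_orientation p G T \<theta>" "g \<in> carrier G" "k \<le> j"
  shows "\<theta> g j mod (int p ^ k) = \<theta> g k"
  using assms(3)
proof (induction j)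
  case 0
  have "0 \<le> \<theta> g 0 \<and> \<theta> g 0 < int p ^ 0" using orient_range[OF assms(1,2)] .
  thus ?case using 0 by simp
next
  case (Suc j)
  show ?case
  proof (cases "k = Suc j")
    case True
    have "0 \<le> \<theta> g k \<and> \<theta> g k < int p ^ k" using orient_range[OF assms(1,2)] .
    thus ?thesis using True by simp
  next
    case False
    hence kj: "k \<le> j" using Suc by simp
    have "\<theta> g (Suc j) mod (int p ^ k) = \<theta> g (Suc j) mod (int p ^ j) mod (int p ^ k)"
      using kj by (simp add: le_imp_power_dvd mod_mod_cancel)
    also have "\<dots> = \<theta> g j mod (int p ^ k)" using orient_compat[OF assms(1,2)] by simp
    finally show ?thesis using Suc.IH kj by simp
  qed
qed

locale lsetup =
  fixes p :: nat and G :: "('g, 'b) monoid_scheme" and T :: "'g topology"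
    and \<theta> :: "'g \<Rightarrow> nat \<Rightarrow> int" and H :: "'g set" and n :: nat
  assumes prime: "prime p"
    and prof: "profinite_group G T"
    and orient: "p_orientation p G T \<theta>"
    and h90: "formal_hilbert90 p G T \<theta>"
    and oH: "open_subgroup H G T"
begin

abbreviation "X \<equiv> subtopology T H"
abbreviation "t g \<equiv> \<theta> g n"
abbreviation "q k \<equiv> int p ^ k"

lemma sgH: "subgroup H G" using oH unfolding open_subgroup_def by blast
lemma Hsub: "H \<subseteq> carrier G" using subgroup.subset[OF sgH] .
lemma Hmul: "g \<in> H \<Longrightarrow> h \<in> H \<Longrightarrow> g \<otimes>\<^bsub>G\<^esub> h \<in> H"
  using subgroup.m_closed[OF sgH] by blast
lemma topX: "topspace X = H"
proof -
  have "topspace T = carrier G" using prof unfolding profinite_group_def topological_group_def by blast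
  thus ?thesis using Hsub by (simp add: Int_absorb1)
qed
lemma ppos: "p > 0" using prime prime_gt_0_nat by blast
lemma qpos: "q k > 0" using ppos by simp

lemma LC_theta: "LC X (\<lambda>g. \<theta> g k)"
proof -
  have "continuous_map T (discrete_topology {0..<int p ^ k}) (\<lambda>g. \<theta> g k)"
    using orient unfolding p_orientation_def by blast
  hence "continuous_map X (discrete_topology {0..<int p ^ k}) (\<lambda>g. \<theta> g k)"
    by (rule continuous_map_from_subtopology)
  thus ?thesis using cont_disc by blast
qed

lemma t_mod: "g \<in> H \<Longrightarrow> k \<le> n \<Longrightarrow> t g mod q k = \<theta> g k"
  using theta_mod[OF orient] Hsub by blast

lemma t_dvd: "g \<in> H \<Longrightarrow> k \<le> n \<Longrightarrow> q k dvd (t g - \<theta> g k)"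
  proof -
  assume a: "g \<in> H" "k \<le> n"
  have "\<theta> g k mod q k = \<theta> g k" using theta_mod[OF orient, of g k k] Hsub a by auto
  hence "t g mod q k = \<theta> g k mod q k" using t_mod[OF a] by simp
  thus ?thesis by (simp add: mod_eq_dvd_iff)
qed

lemma t_mult: "g \<in> H \<Longrightarrow> h \<in> H \<Longrightarrow> q n dvd (t g * t h - t (g \<otimes>\<^bsub>G\<^esub> h))"
proof -
  assume "g \<in> H" "h \<in> H"
  hence "g \<in> carrier G" "h \<in> carrier G" using Hsub by auto
  hence "t (g \<otimes>\<^bsub>G\<^esub> h) = (t g * t h) mod q n" using orient unfolding p_orientation_def by blast
  thus ?thesis by (simp add: mod_eq_dvd_iff[symmetric])
qed

lemma Z1_cocycle:
  assumes "z \<in> Z1 p G T \<theta> H k" "k \<le> n" "g \<in> H" "h \<in> H"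
  shows "q k dvd (z g + t g * z h - z (g \<otimes>\<^bsub>G\<^esub> h))"
proof -
  have e: "z (g \<otimes>\<^bsub>G\<^esub> h) = (z g + \<theta> g k * z h) mod q k" using assms unfolding Z1_def by blast
  have "q k dvd (z g + \<theta> g k * z h - z (g \<otimes>\<^bsub>G\<^esub> h))"
    unfolding e by (simp add: mod_eq_dvd_iff[symmetric])
  moreover have "q k dvd (t g - \<theta> g k) * z h" using t_dvd[OF assms(3,2)] by simp
  ultimately have "q k dvd (z g + \<theta> g k * z h - z (g \<otimes>\<^bsub>G\<^esub> h)) + (t g - \<theta> g k) * z h"
    by (rule dvd_add)
  thus ?thesis by (simp add: algebra_simps)
qed

lemma Z1_LC: "z \<in> Z1 p G T \<theta> H k \<Longrightarrow> LC X z"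
  unfolding Z1_def using cont_disc by blast


abbreviation "del f g h \<equiv> f g + t g * f h - f (g \<otimes>\<^bsub>G\<^esub> h)"

lemma lemA:
  assumes kn: "k + 1 \<le> n" and Lf: "LC X f"
    and hw: "\<forall>g\<in>H. \<forall>h\<in>H. q (k+1) dvd (int p * w g h - del f g h)"
  shows "\<exists>u. LC X u \<and> (\<forall>g\<in>H. \<forall>h\<in>H. q k dvd (w g h - del u g h))"
proof -
  define f' where "f' g = (if g \<in> H then f g mod int p else 0)" for g
  have p1: "int p ^ 1 = int p" by simp
  have f'Z: "f' \<in> Z1 p G T \<theta> H 1"
    unfolding Z1_def
  proof (intro CollectI conjI ballI allI impI)
    fix g assume "g \<in> H" thus "0 \<le> f' g" "f' g < int p ^ 1" using ppos by (auto simp: f'_def)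
  next
    fix g assume "g \<notin> H" thus "f' g = 0" by (simp add: f'_def)
  next
    have "LC X f'"
      by (rule LC_cong[OF LC_un[OF Lf, of "\<lambda>a. a mod int p"]]) (simp add: topX f'_def)
    moreover have "f' \<in> topspace X \<rightarrow> {0..<int p ^ 1}" using ppos by (auto simp: f'_def topX)
    ultimately show "continuous_map X (discrete_topology {0..<int p ^ 1}) f'" using cont_disc by blast
  next
    fix g h assume g: "g \<in> H" and h: "h \<in> H"
    have gh: "g \<otimes>\<^bsub>G\<^esub> h \<in> H" using Hmul g h .
    have "int p dvd q (k+1)" by simp
    hence d1: "int p dvd (int p * w g h - del f g h)" using hw g h dvd_trans by blast
    have d0: "int p dvd int p * w g h" by simp
    have "del f g h = int p * w g h - (int p * w g h - del f g h)" by simp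
    hence d2: "int p dvd del f g h" using d0 d1 dvd_diff by metis
    have d3: "int p dvd (t g - \<theta> g 1)" using t_dvd[OF g, of 1] kn by simp
    have "int p dvd (f g + \<theta> g 1 * f h - f (g \<otimes>\<^bsub>G\<^esub> h))"
    proof -
      have eq: "f g + \<theta> g 1 * f h - f (g \<otimes>\<^bsub>G\<^esub> h) = del f g h - (t g - \<theta> g 1) * f h"
        by (simp add: algebra_simps)
      show ?thesis unfolding eq using d2 dvd_mult2[OF d3] by (rule dvd_diff)
    qed
    hence "f (g \<otimes>\<^bsub>G\<^esub> h) mod int p = (f g + \<theta> g 1 * f h) mod int p"
      by (metis dvd_diff_commute mod_eq_dvd_iff)
    also have "\<dots> = (f g mod int p + \<theta> g 1 * (f h mod int p)) mod int p"
      by (metis mod_add_left_eq mod_add_right_eq mod_mult_right_eq)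
    finally show "f' (g \<otimes>\<^bsub>G\<^esub> h) = (f' g + \<theta> g 1 * f' h) mod (int p ^ 1)"
      using g h gh by (simp add: f'_def)
  qed
  have "h1_class p G T \<theta> H 1 f' \<in> H1 p G T \<theta> H 1" using f'Z unfolding H1_def by blast
  also have "H1 p G T \<theta> H 1 = h1_class p G T \<theta> H 1 ` reduce p 1 ` Z1 p G T \<theta> H (k+1)"
  proof -
    have "\<forall>H n. open_subgroup H G T \<and> n \<ge> 1 \<longrightarrow>
        h1_class p G T \<theta> H 1 ` reduce p 1 ` Z1 p G T \<theta> H n = H1 p G T \<theta> H 1"
      using h90 unfolding formal_hilbert90_def .
    hence "h1_class p G T \<theta> H 1 ` reduce p 1 ` Z1 p G T \<theta> H (k+1) = H1 p G T \<theta> H 1"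
      using oH by simp
    thus ?thesis by simp
  qed
  finally obtain z where zZ: "z \<in> Z1 p G T \<theta> H (k+1)"
    and cl: "h1_class p G T \<theta> H 1 f' = h1_class p G T \<theta> H 1 (reduce p 1 z)" by blast
  have "f' \<in> h1_class p G T \<theta> H 1 f'"
  proof -
    have "(\<lambda>g. (f' g - f' g) mod (int p ^ 1)) \<in> B1 p \<theta> H 1"
      unfolding B1_def by (rule CollectI, rule exI[of _ 0]) simp
    thus ?thesis unfolding h1_class_def using f'Z by blast
  qed
  hence "f' \<in> h1_class p G T \<theta> H 1 (reduce p 1 z)" using cl by simp
  then obtain a where ha: "\<forall>g\<in>H. (f' g - z g mod int p) mod int p = (\<theta> g 1 * a - a) mod int p"
  proof -
    have "(\<lambda>g. (f' g - reduce p 1 z g) mod (int p ^ 1)) \<in> B1 p \<theta> H 1"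
      using \<open>f' \<in> h1_class p G T \<theta> H 1 (reduce p 1 z)\<close> unfolding h1_class_def by blast
    then obtain a where "\<forall>g\<in>H. (\<lambda>g. (f' g - reduce p 1 z g) mod (int p ^ 1)) g = (\<theta> g 1 * a - a) mod (int p ^ 1)"
      unfolding B1_def by blast
    hence "\<forall>g\<in>H. (f' g - z g mod int p) mod int p = (\<theta> g 1 * a - a) mod int p"
      unfolding reduce_def by simp
    thus ?thesis by (rule that)
  qed
  have da: "int p dvd (f g - z g - (t g * a - a))" if g: "g \<in> H" for g
  proof -
    have "(f g mod int p - z g mod int p) mod int p = (\<theta> g 1 * a - a) mod int p"
      using ha g by (simp add: f'_def)
    hence "(f g - z g) mod int p = (\<theta> g 1 * a - a) mod int p" by (simp add: mod_diff_eq)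
    hence e1: "int p dvd (f g - z g - (\<theta> g 1 * a - a))" by (simp add: mod_eq_dvd_iff)
    have "int p dvd (t g - \<theta> g 1)" using t_dvd[OF g, of 1] kn by simp
    hence e2: "int p dvd (t g - \<theta> g 1) * a" by simp
    have eq: "f g - z g - (t g * a - a) = (f g - z g - (\<theta> g 1 * a - a)) - (t g - \<theta> g 1) * a"
      by (simp add: algebra_simps)
    show ?thesis unfolding eq using e1 e2 by (rule dvd_diff)
  qed
  define u where "u g = (f g - z g - (t g * a - a)) div int p" for g
  have pu: "int p * u g = f g - z g - (t g * a - a)" if "g \<in> H" for g
    using da[OF that] unfolding u_def by simp
  have Lu: "LC X u"
  proof -
    have Lz: "LC X z" using Z1_LC[OF zZ] .
    have "LC X (\<lambda>g. f g - z g)" using LC_bin[OF Lf Lz, of "\<lambda>a b. a - b"] by simp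
    hence "LC X (\<lambda>g. (f g - z g - (t g * a - a)) div int p)"
      using LC_bin[OF _ LC_theta[of n], of "\<lambda>g. f g - z g" "\<lambda>x y. (x - (y * a - a)) div int p"] by simp
    thus ?thesis unfolding u_def .
  qed
  have "q k dvd (w g h - del u g h)" if g: "g \<in> H" and h: "h \<in> H" for g h
  proof -
    have gh: "g \<otimes>\<^bsub>G\<^esub> h \<in> H" using Hmul g h .
    have "int p * del u g h = int p * u g + t g * (int p * u h) - int p * u (g \<otimes>\<^bsub>G\<^esub> h)"
      by (simp add: algebra_simps)
    also have "\<dots> = del f g h - del z g h - (t g * t h - t (g \<otimes>\<^bsub>G\<^esub> h)) * a"
      unfolding pu[OF g] pu[OF h] pu[OF gh] by (simp add: algebra_simps)
    finally have e: "int p * w g h - int p * del u g h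
       = (int p * w g h - del f g h) + del z g h + (t g * t h - t (g \<otimes>\<^bsub>G\<^esub> h)) * a"
      by simp
    have c1: "q (k+1) dvd (int p * w g h - del f g h)" using hw g h by blast
    have c2: "q (k+1) dvd del z g h" using Z1_cocycle[OF zZ kn g h] .
    have "q (k+1) dvd q n" using kn by (rule le_imp_power_dvd)
    hence c3: "q (k+1) dvd (t g * t h - t (g \<otimes>\<^bsub>G\<^esub> h)) * a"
      using t_mult[OF g h] dvd_trans dvd_mult2 by blast
    have "q (k+1) dvd (int p * w g h - int p * del u g h)"
      unfolding e using c1 c2 c3 by (simp add: dvd_add)
    hence "int p * q k dvd int p * (w g h - del u g h)" by (simp add: algebra_simps)
    thus ?thesis using ppos by simp
  qed
  thus ?thesis using Lu by blast
qed


lemma lemB: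
  "j + 1 \<le> n \<Longrightarrow> LC X f \<Longrightarrow> (\<forall>g\<in>H. \<forall>h\<in>H. q (j+1) dvd (q j * w g h - del f g h))
    \<Longrightarrow> \<exists>b. LC X b \<and> (\<forall>g\<in>H. \<forall>h\<in>H. int p dvd (w g h - del b g h))"
proof (induction j arbitrary: w f)
  case 0
  thus ?case by auto
next
  case (Suc j)
  have kn: "(j + 1) + 1 \<le> n" using Suc.prems(1) by simp
  have hw: "\<forall>g\<in>H. \<forall>h\<in>H. q (j+1+1) dvd (int p * (q j * w g h) - del f g h)"
    using Suc.prems(3) by (simp add: algebra_simps)
  obtain u where u: "LC X u" "\<forall>g\<in>H. \<forall>h\<in>H. q (j+1) dvd (q j * w g h - del u g h)"
    using lemA[OF kn Suc.prems(2) hw] by blast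
  show ?case using Suc.IH[of u w] u Suc.prems(1) by simp
qed

lemma red_Z1:
  assumes dZ: "d \<in> Z1 p G T \<theta> H n" and mn: "m \<le> n"
  shows "reduce p m d \<in> Z1 p G T \<theta> H m"
  unfolding Z1_def
proof (intro CollectI conjI ballI allI impI)
  fix g assume "g \<in> H" thus "0 \<le> reduce p m d g" "reduce p m d g < int p ^ m"
    using qpos[of m] unfolding reduce_def by auto
next
  fix g assume "g \<notin> H" thus "reduce p m d g = 0" using dZ unfolding Z1_def reduce_def by simp
next
  have "LC X (reduce p m d)" unfolding reduce_def using LC_un[OF Z1_LC[OF dZ]] .
  moreover have "reduce p m d \<in> topspace X \<rightarrow> {0..<int p ^ m}"
    using qpos[of m] unfolding reduce_def by auto
  ultimately show "continuous_map X (discrete_topology {0..<int p ^ m}) (reduce p m d)"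
    using cont_disc by blast
next
  fix g h assume g: "g \<in> H" and h: "h \<in> H"
  have e: "d (g \<otimes>\<^bsub>G\<^esub> h) = (d g + \<theta> g n * d h) mod q n" using dZ g h unfolding Z1_def by blast
  have qd: "q m dvd q n" using mn by (rule le_imp_power_dvd)
  have l: "reduce p m d (g \<otimes>\<^bsub>G\<^esub> h) = (d g + \<theta> g n * d h) mod q m"
    unfolding reduce_def e using qd by (simp add: mod_mod_cancel)
  have r: "(reduce p m d g + \<theta> g m * reduce p m d h) mod q m = (d g + \<theta> g m * d h) mod q m"
    unfolding reduce_def by (metis mod_add_left_eq mod_add_right_eq mod_mult_right_eq)
  have "q m dvd (t g - \<theta> g m) * d h" using t_dvd[OF g mn] by simp
  moreover have "(d g + \<theta> g n * d h) - (d g + \<theta> g m * d h) = (t g - \<theta> g m) * d h"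
    by (simp add: algebra_simps)
  ultimately have "(d g + \<theta> g n * d h) mod q m = (d g + \<theta> g m * d h) mod q m"
    by (metis mod_eq_dvd_iff)
  thus "reduce p m d (g \<otimes>\<^bsub>G\<^esub> h) = (reduce p m d g + \<theta> g m * reduce p m d h) mod q m"
    using l r by simp
qed

lemma lift:
  assumes n1: "1 \<le> n" and cZ: "c \<in> Z1 p G T \<theta> H (n - 1)"
  shows "\<exists>d \<in> Z1 p G T \<theta> H n. reduce p (n - 1) d = c"
proof -
  define m where "m = n - 1"
  have nm: "n = Suc m" using n1 unfolding m_def by simp
  have cZ': "c \<in> Z1 p G T \<theta> H m" using cZ unfolding m_def .
  define \<omega> where "\<omega> g h = del c g h div q m" for g h
  have qw: "q m * \<omega> g h = del c g h" if "g \<in> H" "h \<in> H" for g h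
    using Z1_cocycle[OF cZ' _ that] nm unfolding \<omega>_def by simp
  have "\<forall>g\<in>H. \<forall>h\<in>H. q (m+1) dvd (q m * \<omega> g h - del c g h)" using qw by simp
  then obtain b where b: "LC X b" "\<forall>g\<in>H. \<forall>h\<in>H. int p dvd (\<omega> g h - del b g h)"
    using lemB[of m c \<omega>] nm Z1_LC[OF cZ'] by auto
  define d where "d g = (if g \<in> H then (c g - q m * b g) mod q n else 0)" for g
  have dZ: "d \<in> Z1 p G T \<theta> H n"
    unfolding Z1_def
  proof (intro CollectI conjI ballI allI impI)
    fix g assume "g \<in> H" thus "0 \<le> d g" "d g < int p ^ n" using qpos[of n] by (auto simp: d_def)
  next
    fix g assume "g \<notin> H" thus "d g = 0" by (simp add: d_def)
  next
    have "LC X (\<lambda>g. (c g - q m * b g) mod q n)"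
      using LC_bin[OF Z1_LC[OF cZ'] b(1), of "\<lambda>x y. (x - q m * y) mod q n"] by simp
    hence "LC X d" by (rule LC_cong) (simp add: topX d_def)
    moreover have "d \<in> topspace X \<rightarrow> {0..<int p ^ n}" using qpos[of n] by (auto simp: d_def topX)
    ultimately show "continuous_map X (discrete_topology {0..<int p ^ n}) d" using cont_disc by blast
  next
    fix g h assume g: "g \<in> H" and h: "h \<in> H"
    have gh: "g \<otimes>\<^bsub>G\<^esub> h \<in> H" using Hmul g h .
    have r: "(d g + \<theta> g n * d h) mod q n = ((c g - q m * b g) + t g * (c h - q m * b h)) mod q n"
      unfolding d_def using g h by (simp, metis mod_add_left_eq mod_add_right_eq mod_mult_right_eq)
    have pd: "int p dvd (\<omega> g h - del b g h)" using b(2) g h by blast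
    have "((c g - q m * b g) + t g * (c h - q m * b h)) - (c (g \<otimes>\<^bsub>G\<^esub> h) - q m * b (g \<otimes>\<^bsub>G\<^esub> h))
        = del c g h - q m * del b g h" by (simp add: algebra_simps)
    also have "\<dots> = q m * (\<omega> g h - del b g h)" using qw[OF g h] by (simp add: algebra_simps)
    finally have eq: "((c g - q m * b g) + t g * (c h - q m * b h)) - (c (g \<otimes>\<^bsub>G\<^esub> h) - q m * b (g \<otimes>\<^bsub>G\<^esub> h))
        = q m * (\<omega> g h - del b g h)" .
    have "q n dvd q m * (\<omega> g h - del b g h)" using pd nm by (simp add: mult_dvd_mono mult.commute)
    hence "((c g - q m * b g) + t g * (c h - q m * b h)) mod q n = (c (g \<otimes>\<^bsub>G\<^esub> h) - q m * b (g \<otimes>\<^bsub>G\<^esub> h)) mod q n"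
      unfolding mod_eq_dvd_iff eq .
    thus "d (g \<otimes>\<^bsub>G\<^esub> h) = (d g + \<theta> g n * d h) mod (int p ^ n)"
      using r gh by (simp add: d_def)
  qed
  have "reduce p m d = c"
  proof
    fix g show "reduce p m d g = c g"
    proof (cases "g \<in> H")
      case True
      have "0 \<le> c g" "c g < q m" using cZ' True unfolding Z1_def by auto
      moreover have "q m dvd q n" using nm by (simp add: le_imp_power_dvd)
      moreover have "(c g - q m * b g) mod q m = (c g mod q m - (q m * b g) mod q m) mod q m"
        by (rule mod_diff_eq[symmetric])
      ultimately show ?thesis using True unfolding reduce_def d_def
        by (simp add: mod_mod_cancel)
    next
      case False thus ?thesis using cZ' unfolding reduce_def d_def Z1_def by simp
    qed
  qed
  thus ?thesis using dZ unfolding m_def by blast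
qed

end

theorem lemma2p3:
  fixes p :: nat and G :: "('g, 'b) monoid_scheme" and T :: "'g topology"
    and \<theta> :: "'g \<Rightarrow> nat \<Rightarrow> int"
  assumes "prime p"
    and "profinite_group G T"
    and "p_orientation p G T \<theta>"
    and "formal_hilbert90 p G T \<theta>"
  shows "\<forall>H n. open_subgroup H G T \<and> n \<ge> 1 \<longrightarrow>
           reduce p (n - 1) ` Z1 p G T \<theta> H n = Z1 p G T \<theta> H (n - 1) \<and>
           h1_class p G T \<theta> H (n - 1) ` reduce p (n - 1) ` Z1 p G T \<theta> H n
             = H1 p G T \<theta> H (n - 1)"
proof (intro allI impI)
  fix H and n :: nat assume a: "open_subgroup H G T \<and> n \<ge> 1"
  interpret L: lsetup p G T \<theta> H n using assms a by unfold_locales auto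
  have e: "reduce p (n - 1) ` Z1 p G T \<theta> H n = Z1 p G T \<theta> H (n - 1)"
  proof
    show "reduce p (n - 1) ` Z1 p G T \<theta> H n \<subseteq> Z1 p G T \<theta> H (n - 1)"
      using L.red_Z1 by auto
    show "Z1 p G T \<theta> H (n - 1) \<subseteq> reduce p (n - 1) ` Z1 p G T \<theta> H n"
      using L.lift a by blast
  qed
  thus "reduce p (n - 1) ` Z1 p G T \<theta> H n = Z1 p G T \<theta> H (n - 1) \<and>
           h1_class p G T \<theta> H (n - 1) ` reduce p (n - 1) ` Z1 p G T \<theta> H n
             = H1 p G T \<theta> H (n - 1)" unfolding H1_def by simp
qed

end
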